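(* Let $n\ge2$, $v\in S^{n-1}$, $x_0,y_0\in\mathbb R^n$ and $\alpha,\beta\in\mathbb R$. For $t\in\mathbb R$ let $L_t=\mathrm{conv}_c(\{x_0+t\alpha v,\ y_0+t\beta v\})$. Then $f(t)=\mathrm{Vol}_n(L_t)\in[0,\infty]$ is a convex function of $t\in\mathbb R$.
   Context: For $x\in\mathbb R^n$, $B(x,1)$ is the closed Euclidean unit ball centered at $x$. For $A\subseteq\mathbb R^n$, $A^c=\bigcap_{x\in A}B(x,1)$ (with $\emptyset^c=\mathbb R^n$) and $\mathrm{conv}_c(A)=A^{cc}$; if $A$ is contained in no closed unit ball, $\mathrm{conv}_c(A)=\mathbb R^n$ and has infinite volume. *)

theory Defs
  imports "HOL-Analysis.Analysis"
begin

text \<open>Spherical dual: intersection of closed unit balls centred at points of A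
  (equals UNIV for A empty).\<close>
definition c_dual :: "'a::metric_space set \<Rightarrow> 'a set" where
  "c_dual A = (\<Inter>x\<in>A. cball x 1)"

definition conv_c :: "'a::metric_space set \<Rightarrow> 'a set" where
  "conv_c A = c_dual (c_dual A)"

end

theory Submission
  imports Defs
begin

typedef 'a wo = "UNIV :: 'a set" by simp

definition idx :: "'a::finite \<Rightarrow> nat" where "idx = (SOME f. inj f)"

lemma inj_idx: "inj (idx :: 'a::finite \<Rightarrow> nat)"
proof -
  have "\<exists>f::'a \<Rightarrow> nat. inj f"
    using finite_imp_inj_to_nat_seg[of "UNIV :: 'a set"] by auto
  then show ?thesis unfolding idx_def by (rule someI_ex)
qed

instantiation wo :: (finite) linorder
begin
definition less_eq_wo :: "'a wo \<Rightarrow> 'a wo \<Rightarrow> bool" where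
  "less_eq_wo x y \<longleftrightarrow> idx (Rep_wo x) \<le> idx (Rep_wo y)"
definition less_wo :: "'a wo \<Rightarrow> 'a wo \<Rightarrow> bool" where
  "less_wo x y \<longleftrightarrow> idx (Rep_wo x) < idx (Rep_wo y)"
instance
proof
  fix x y :: "'a wo"
  assume "x \<le> y" "y \<le> x"
  then have "idx (Rep_wo x) = idx (Rep_wo y)" by (simp add: less_eq_wo_def)
  then show "x = y" using inj_idx by (metis Rep_wo_inject injD)
qed (auto simp: less_eq_wo_def less_wo_def)
end

instance wo :: (finite) wellorder
proof
  fix P :: "'a wo \<Rightarrow> bool" and a :: "'a wo"
  assume H: "\<And>x. (\<And>y. y < x \<Longrightarrow> P y) \<Longrightarrow> P x"
  show "P a"
    by (induction a rule: measure_induct_rule[of "\<lambda>x. idx (Rep_wo x)"]) (rule H, simp add: less_wo_def)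
qed

instance wo :: (finite) finite
proof
  have "(UNIV :: 'a wo set) = Abs_wo ` UNIV"
    by (metis Rep_wo_inverse surj_def)
  moreover have "finite (Abs_wo ` (UNIV :: 'a set))"
    by (rule finite_imageI) simp
  ultimately show "finite (UNIV :: 'a wo set)" by simp
qed

definition sg :: "real^'n \<Rightarrow> real^('n wo)" where "sg z = (\<chi> i. z $ Rep_wo i)"
definition tg :: "real^('n wo) \<Rightarrow> real^'n" where "tg w = (\<chi> j. w $ Abs_wo j)"

lemma tg_sg[simp]: "tg (sg z) = z"
  by (simp add: tg_def sg_def Abs_wo_inverse vec_eq_iff)
lemma sg_tg[simp]: "sg (tg w) = w"
  by (simp add: tg_def sg_def Rep_wo_inverse vec_eq_iff)

lemma linear_sg: "linear sg"
  by (auto simp: linear_iff sg_def vec_eq_iff)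
lemma linear_tg: "linear tg"
  by (auto simp: linear_iff tg_def vec_eq_iff)

lemma bij_Rep_wo: "bij_betw Rep_wo UNIV UNIV"
  by (metis Rep_wo_inject UNIV_I bij_betw_def inj_onI Rep_wo_cases surj_def)

lemma inner_sg: "sg x \<bullet> sg y = x \<bullet> y"
proof -
  have "sg x \<bullet> sg y = (\<Sum>i\<in>UNIV. x $ Rep_wo i * y $ Rep_wo i)"
    by (simp add: inner_vec_def sg_def)
  also have "\<dots> = (\<Sum>j\<in>UNIV. x $ j * y $ j)"
    using sum.reindex_bij_betw[OF bij_Rep_wo, of "\<lambda>j. x $ j * y $ j"] by simp
  finally show ?thesis by (simp add: inner_vec_def)
qed

lemma inner_tg: "tg x \<bullet> tg y = x \<bullet> y"
  by (metis inner_sg sg_tg)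

lemma prod_Basis_cart: "(\<Prod>b\<in>(Basis::(real^'n) set). g b) = (\<Prod>i\<in>UNIV. g (axis i 1))"
proof -
  have "(Basis::(real^'n) set) = (\<lambda>i. axis i 1) ` UNIV"
    by (auto simp: Basis_vec_def)
  moreover have "inj (\<lambda>i::'n. axis i (1::real))"
    by (auto simp: inj_on_def axis_eq_axis)
  ultimately show ?thesis using prod.reindex[of "\<lambda>i::'n. axis i (1::real)" UNIV g] by simp
qed

lemma all_Basis_cart: "(\<forall>b\<in>(Basis::(real^'n) set). P b) \<longleftrightarrow> (\<forall>i. P (axis i 1))"
  by (auto simp: Basis_vec_def)

lemma emeasure_box_cart:
  "emeasure lborel (box l (u::real^'n)) = (if \<forall>i. l $ i \<le> u $ i then ennreal (\<Prod>i\<in>UNIV. u $ i - l $ i) else 0)"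
  unfolding emeasure_lborel_box_eq prod_Basis_cart all_Basis_cart
  by (simp add: cart_eq_inner_axis[symmetric])

lemma distr_tg: "distr lborel borel tg = (lborel :: (real^'n) measure)"
proof (rule lborel_eqI[symmetric])
  fix l u :: "real^'n"
  assume le: "\<And>b. b \<in> Basis \<Longrightarrow> l \<bullet> b \<le> u \<bullet> b"
  have meas: "tg \<in> borel_measurable borel"
    by (intro borel_measurable_continuous_onI linear_continuous_on linear_tg[THEN linear_conv_bounded_linear[THEN iffD1]])
  have pre: "tg -` box l u = box (sg l) (sg u)"
    apply (auto simp: mem_box_cart tg_def sg_def)
    apply (metis Rep_wo_inverse)+
    apply (metis Abs_wo_inverse UNIV_I)+
    done
  have le': "\<forall>i. l $ i \<le> u $ i"
    using le by (auto simp: cart_eq_inner_axis all_Basis_cart)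
  have "emeasure (distr lborel borel tg) (box l u) = emeasure lborel (tg -` box l u)"
    using meas by (subst emeasure_distr) auto
  also have "\<dots> = ennreal (\<Prod>i\<in>UNIV. u $ Rep_wo i - l $ Rep_wo i)"
    unfolding pre using le' by (simp add: emeasure_box_cart sg_def)
  also have "(\<Prod>i\<in>UNIV. u $ Rep_wo i - l $ Rep_wo i) = (\<Prod>j\<in>UNIV. u $ j - l $ j)"
    using prod.reindex_bij_betw[OF bij_Rep_wo, of "\<lambda>j. u $ j - l $ j"] by simp
  also have "\<dots> = (\<Prod>b\<in>Basis. (u - l) \<bullet> b)"
    by (simp add: prod_Basis_cart cart_eq_inner_axis[symmetric])
  finally show "emeasure (distr lborel borel tg) (box l u) = (\<Prod>b\<in>Basis. (u - l) \<bullet> b)" .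
qed simp

lemma linear_meas: "linear (f :: 'u::euclidean_space \<Rightarrow> 'v::euclidean_space) \<Longrightarrow> f \<in> borel_measurable borel"
  by (intro borel_measurable_continuous_onI linear_continuous_on, simp add: linear_conv_bounded_linear)

lemma orth_distr_wo:
  fixes g :: "real^'m::{finite,wellorder} \<Rightarrow> real^'m::_"
  assumes g: "orthogonal_transformation g"
  shows "distr lborel borel g = lborel"
proof (rule lborel_eqI[symmetric])
  fix l u :: "(real,'m) vec"
  assume le: "\<And>b. b \<in> Basis \<Longrightarrow> l \<bullet> b \<le> u \<bullet> b"
  have meas: "g \<in> borel_measurable borel"
    using g by (simp add: linear_meas orthogonal_transformation_linear)
  have bij: "bij g" using g by (rule orthogonal_transformation_bij)
  have pre: "g -` box l u = inv g ` box l u"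
    using bij by (simp add: bij_vimage_eq_inv_image)
  have gi: "orthogonal_transformation (inv g)" using g by (rule orthogonal_transformation_inv)
  have Bm: "box l u \<in> lmeasurable" by simp
  have PB: "g -` box l u \<in> sets borel" using measurable_sets[OF meas, of "box l u"] by simp
  have "emeasure (distr lborel borel g) (box l u) = emeasure lborel (g -` box l u)"
    using meas by (subst emeasure_distr) auto
  also have "\<dots> = emeasure lebesgue (g -` box l u)"
    using PB by simp
  also have "\<dots> = ennreal (measure lebesgue (inv g ` box l u))"
    unfolding pre using measurable_orthogonal_image[OF gi Bm]
    by (rule emeasure_eq_measure2)
  also have "\<dots> = ennreal (measure lebesgue (box l u))"
    using measure_orthogonal_image[OF gi Bm] by simp
  also have "\<dots> = emeasure lebesgue (box l u)"
    using Bm by (rule emeasure_eq_measure2[symmetric])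
  also have "\<dots> = emeasure lborel (box l u)" by simp
  also have "\<dots> = (\<Prod>b\<in>Basis. (u - l) \<bullet> b)"
    using le by (simp add: emeasure_lborel_box_eq)
  finally show "emeasure (distr lborel borel g) (box l u) = (\<Prod>b\<in>Basis. (u - l) \<bullet> b)" .
qed simp

lemma orth_distr:
  fixes f :: "real^'n \<Rightarrow> real^'n"
  assumes f: "orthogonal_transformation f"
  shows "distr lborel borel f = lborel"
proof -
  define g where "g = sg \<circ> f \<circ> tg"
  have g: "orthogonal_transformation g"
    using f unfolding g_def orthogonal_transformation_def
    by (auto simp: inner_sg inner_tg intro!: linear_compose linear_sg linear_tg)
  have mf: "f \<in> borel_measurable borel" using f by (simp add: linear_meas orthogonal_transformation_linear)
  have mg: "g \<in> borel_measurable borel" using g by (simp add: linear_meas orthogonal_transformation_linear)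
  have mt: "tg \<in> borel_measurable borel" by (simp add: linear_meas linear_tg)
  have eq: "f \<circ> tg = tg \<circ> g" by (auto simp: g_def)
  have "distr lborel borel f = distr (distr lborel borel tg) borel f"
    by (simp add: distr_tg)
  also have "\<dots> = distr lborel borel (f \<circ> tg)"
    by (subst distr_distr) (use mf mt in auto)
  also have "\<dots> = distr lborel borel (tg \<circ> g)" by (simp add: eq)
  also have "\<dots> = distr (distr lborel borel g) borel tg"
    by (subst distr_distr) (use mg mt in auto)
  also have "\<dots> = lborel" by (simp add: orth_distr_wo[OF g] distr_tg)
  finally show ?thesis .
qed

lemma emeasure_orth_preimage:
  fixes f :: "real^'n \<Rightarrow> real^'n"
  assumes f: "orthogonal_transformation f" and Y: "Y \<in> sets borel"
  shows "emeasure lborel (f -` Y) = emeasure lborel Y"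
proof -
  have mf: "f \<in> borel_measurable borel" using f by (simp add: linear_meas orthogonal_transformation_linear)
  have "emeasure lborel Y = emeasure (distr lborel borel f) Y" by (simp add: orth_distr[OF f])
  also have "\<dots> = emeasure lborel (f -` Y)" using mf Y by (subst emeasure_distr) auto
  finally show ?thesis ..
qed


definition spin :: "'a::euclidean_space \<Rightarrow> real \<Rightarrow> 'a set" where
  "spin e h = {z. (z \<bullet> e)\<^sup>2 + (norm (z - (z \<bullet> e) *\<^sub>R e) + h)\<^sup>2 \<le> 1}"

lemma closed_spin: "closed (spin e h)"
  unfolding spin_def by (intro closed_Collect_le continuous_intros)

lemma spin_iff_aux:
  fixes s h y :: real
  assumes "s \<ge> 0" "h \<ge> 0"
  shows "y\<^sup>2 + (s + h)\<^sup>2 \<le> 1 \<longleftrightarrow> s \<le> sqrt (1 - y\<^sup>2) - h"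
proof (cases "y\<^sup>2 \<le> 1")
  case True
  then have "y\<^sup>2 + (s + h)\<^sup>2 \<le> 1 \<longleftrightarrow> (s + h)\<^sup>2 \<le> 1 - y\<^sup>2" by linarith
  also have "\<dots> \<longleftrightarrow> s + h \<le> sqrt (1 - y\<^sup>2)"
  proof -
    have "s + h = sqrt ((s + h)\<^sup>2)" using assms by simp
    then show ?thesis by (metis real_sqrt_le_iff)
  qed
  finally show ?thesis by linarith
next
  case False
  then have "sqrt (1 - y\<^sup>2) < 0" by simp
  moreover have "(s + h)\<^sup>2 \<ge> 0" by simp
  ultimately show ?thesis using False assms by linarith
qed

lemma inner_sum_Basis_sub:
  fixes f :: "'a::euclidean_space \<Rightarrow> real"
  assumes "B \<subseteq> Basis" "b \<in> B"
  shows "(\<Sum>c\<in>B. f c *\<^sub>R c) \<bullet> b = f b"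
proof -
  have "(\<Sum>c\<in>B. f c *\<^sub>R c) \<bullet> b = (\<Sum>c\<in>B. f c * (c \<bullet> b))"
    by (simp add: inner_sum_left)
  also have "\<dots> = (\<Sum>c\<in>B. if c = b then f c else 0)"
  proof (intro sum.cong refl)
    fix c assume "c \<in> B"
    then have "c \<in> Basis" "b \<in> Basis" using assms by auto
    then show "f c * (c \<bullet> b) = (if c = b then f c else 0)" by (simp add: inner_Basis)
  qed
  also have "\<dots> = f b" using assms finite_subset[OF assms(1)] by simp
  finally show ?thesis .
qed

lemma norm_sum_Basis_sub:
  fixes f :: "'a::euclidean_space \<Rightarrow> real"
  assumes "B \<subseteq> Basis"
  shows "norm (\<Sum>c\<in>B. f c *\<^sub>R c) = sqrt (\<Sum>c\<in>B. (f c)\<^sup>2)"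
proof -
  have "(\<Sum>c\<in>B. f c *\<^sub>R c) \<bullet> (\<Sum>c\<in>B. f c *\<^sub>R c) = (\<Sum>b\<in>B. f b * ((\<Sum>c\<in>B. f c *\<^sub>R c) \<bullet> b))"
    unfolding inner_sum_right[of "\<Sum>c\<in>B. f c *\<^sub>R c"] inner_scaleR_right ..
  also have "\<dots> = (\<Sum>b\<in>B. (f b)\<^sup>2)"
    using assms by (intro sum.cong) (auto simp: inner_sum_Basis_sub power2_eq_square)
  finally show ?thesis by (simp add: norm_eq_sqrt_inner)
qed

lemma coord_facts:
  fixes f :: "'a::euclidean_space \<Rightarrow> real"
  assumes b0: "b0 \<in> Basis"
  defines "Z \<equiv> (\<Sum>b\<in>Basis. f b *\<^sub>R b)"
  shows "Z \<bullet> b0 = f b0"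
    and "norm (Z - (Z \<bullet> b0) *\<^sub>R b0) = sqrt (\<Sum>b\<in>Basis - {b0}. (f b)\<^sup>2)"
proof -
  show 1: "Z \<bullet> b0 = f b0"
    unfolding Z_def using b0 by (rule inner_sum_Basis_sub[OF order_refl])
  have "Z = f b0 *\<^sub>R b0 + (\<Sum>b\<in>Basis - {b0}. f b *\<^sub>R b)"
    unfolding Z_def using b0 by (simp add: sum.remove)
  then have "Z - (Z \<bullet> b0) *\<^sub>R b0 = (\<Sum>b\<in>Basis - {b0}. f b *\<^sub>R b)"
    unfolding 1 by simp
  then show "norm (Z - (Z \<bullet> b0) *\<^sub>R b0) = sqrt (\<Sum>b\<in>Basis - {b0}. (f b)\<^sup>2)"
    by (simp add: norm_sum_Basis_sub)
qed

lemma emeasure_spin_basis: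
  fixes b0 :: "'a::euclidean_space"
  assumes b0: "b0 \<in> Basis" and h: "h \<ge> 0" and dim: "DIM('a) \<ge> 2"
  shows "emeasure lborel (spin b0 h) =
    (\<integral>\<^sup>+y. ennreal (unit_ball_vol (real (DIM('a) - 1)) * (max 0 (sqrt (1 - y\<^sup>2) - h)) ^ (DIM('a) - 1)) \<partial>lborel)"
proof -
  define A where "A = Basis - {b0}"
  have Bas: "(Basis :: 'a set) = insert b0 A" using b0 by (auto simp: A_def)
  have b0A: "b0 \<notin> A" and finA: "finite A" by (auto simp: A_def)
  have cardA: "card A = DIM('a) - 1" using b0 by (simp add: A_def card_Diff_singleton)
  have cardA1: "card A \<ge> 1" using dim cardA by simp
  define P where "P = {f :: 'a \<Rightarrow> real. (f b0)\<^sup>2 + (sqrt (\<Sum>b\<in>A. (f b)\<^sup>2) + h)\<^sup>2 \<le> 1}"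
  define r where "r = (\<lambda>y::real. sqrt (1 - y\<^sup>2) - h)"
  define \<kappa> where "\<kappa> = unit_ball_vol (real (card A))"
  interpret product_sigma_finite "\<lambda>_. lborel"
    by standard
  have spin_borel: "spin b0 h \<in> sets borel"
    using closed_spin by (rule borel_closed)
  have eqP: "{f. (\<Sum>b\<in>Basis. f b *\<^sub>R b) \<in> spin b0 h} = P"
    using coord_facts[OF b0] by (auto simp: spin_def P_def A_def)
  have "emeasure lborel (spin b0 h) =
      emeasure (distr (Pi\<^sub>M Basis (\<lambda>_. lborel)) borel (\<lambda>f. \<Sum>b\<in>Basis. f b *\<^sub>R b)) (spin b0 h)"
    by (subst lborel_eq) (rule refl)
  also have "\<dots> = emeasure (Pi\<^sub>M Basis (\<lambda>_. lborel))
      ({f. (\<Sum>b\<in>Basis. f b *\<^sub>R b) \<in> spin b0 h} \<inter> space (Pi\<^sub>M Basis (\<lambda>_. lborel)))"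
    using spin_borel by (subst emeasure_distr) (auto simp: vimage_def Int_def)
  also have "\<dots> = emeasure (Pi\<^sub>M (insert b0 A) (\<lambda>_. lborel)) (P \<inter> space (Pi\<^sub>M (insert b0 A) (\<lambda>_. lborel)))"
    by (simp only: eqP flip: Bas)
  also have "\<dots> = nn_integral (Pi\<^sub>M (insert b0 A) (\<lambda>_. lborel))
      (indicator (P \<inter> space (Pi\<^sub>M (insert b0 A) (\<lambda>_. lborel))))"
    by (subst nn_integral_indicator) (auto simp: P_def)
  also have "\<dots> = (\<integral>\<^sup>+ y. \<integral>\<^sup>+ x. indicator (P \<inter> space (Pi\<^sub>M (insert b0 A) (\<lambda>_. lborel))) (x(b0 := y))
                   \<partial>Pi\<^sub>M A (\<lambda>_. lborel) \<partial>lborel)"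
    using finA b0A by (subst product_nn_integral_insert_rev) (auto simp: P_def)
  also have "\<dots> = (\<integral>\<^sup>+ y. \<integral>\<^sup>+ x. indicator ({f. sqrt (\<Sum>b\<in>A. (f b)\<^sup>2) \<le> r y} \<inter> space (Pi\<^sub>M A (\<lambda>_. lborel))) x
                   \<partial>Pi\<^sub>M A (\<lambda>_. lborel) \<partial>lborel)"
  proof (intro nn_integral_cong, goal_cases)
    case (1 y x)
    have s: "(\<Sum>b\<in>A. ((x(b0 := y)) b)\<^sup>2) = (\<Sum>b\<in>A. (x b)\<^sup>2)"
      using b0A by (intro sum.cong) auto
    have iff: "(y\<^sup>2 + (sqrt (\<Sum>b\<in>A. (x b)\<^sup>2) + h)\<^sup>2 \<le> 1) \<longleftrightarrow> sqrt (\<Sum>b\<in>A. (x b)\<^sup>2) \<le> r y"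
      unfolding r_def using h by (intro spin_iff_aux) (auto intro: sum_nonneg)
    show ?case using 1 s iff b0A
      by (auto simp: P_def indicator_def PiE_def space_PiM extensional_def)
  qed
  also have "\<dots> = (\<integral>\<^sup>+ y. emeasure (Pi\<^sub>M A (\<lambda>_. lborel)) ({f. sqrt (\<Sum>b\<in>A. (f b)\<^sup>2) \<le> r y} \<inter> space (Pi\<^sub>M A (\<lambda>_. lborel))) \<partial>lborel)"
    using finA by (intro nn_integral_cong, subst nn_integral_indicator) auto
  also have "\<dots> = (\<integral>\<^sup>+ y. ennreal (\<kappa> * (max 0 (r y)) ^ card A) \<partial>lborel)"
  proof (intro nn_integral_cong_AE)
    have "AE y in lborel. y \<notin> {sqrt (1 - h\<^sup>2), - sqrt (1 - h\<^sup>2)}"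
      by (intro AE_not_in countable_imp_null_set_lborel) auto
    then show "AE y in lborel. emeasure (Pi\<^sub>M A (\<lambda>_. lborel)) ({f. sqrt (\<Sum>b\<in>A. (f b)\<^sup>2) \<le> r y} \<inter> space (Pi\<^sub>M A (\<lambda>_. lborel)))
        = ennreal (\<kappa> * (max 0 (r y)) ^ card A)"
    proof eventually_elim
      case (elim y)
      show ?case
      proof (cases "r y > 0")
        case True
        then show ?thesis using emeasure_cball_aux[OF finA True]
          by (simp add: \<kappa>_def max_def)
      next
        case False
        have "r y \<noteq> 0"
        proof
          assume "r y = 0"
          then have sq: "sqrt (1 - y\<^sup>2) = h" by (simp add: r_def)
          then have "1 - y\<^sup>2 \<ge> 0" using h
            by (metis real_sqrt_lt_0_iff linorder_not_le order_less_le_trans le_less)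
          then have "1 - y\<^sup>2 = h\<^sup>2" using sq by (metis real_sqrt_pow2)
          then have e: "1 - h\<^sup>2 = y\<^sup>2" by linarith
          then have "y\<^sup>2 = (sqrt (1 - h\<^sup>2))\<^sup>2" by simp
          then have "y = sqrt (1 - h\<^sup>2) \<or> y = - sqrt (1 - h\<^sup>2)"
            by (metis power2_eq_iff)
          then show False using elim by auto
        qed
        with False have neg: "r y < 0" by simp
        have nn: "0 \<le> sqrt (\<Sum>b\<in>A. (f b)\<^sup>2)" for f :: "'a \<Rightarrow> real"
          by (simp add: sum_nonneg)
        have "{f. sqrt (\<Sum>b\<in>A. (f b)\<^sup>2) \<le> r y} = {}"
        proof -
          have False if "sqrt (\<Sum>b\<in>A. (f b)\<^sup>2) \<le> r y" for f :: "'a \<Rightarrow> real"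
            using that nn[of f] neg by linarith
          then show ?thesis by blast
        qed
        moreover obtain k where "card A = Suc k" using cardA1 by (cases "card A") auto
        ultimately show ?thesis using neg by (simp add: max_def)
      qed
    qed
  qed
  finally show ?thesis by (simp add: r_def \<kappa>_def cardA)
qed

lemma c_dual_pair: "c_dual {a, b} = cball a 1 \<inter> cball b 1"
  by (simp add: c_dual_def)

lemma conv_c_pair: "conv_c {a, b} = {z. \<forall>c. dist a c \<le> 1 \<and> dist b c \<le> 1 \<longrightarrow> dist c z \<le> 1}"
  by (auto simp: conv_c_def c_dual_pair c_dual_def)

lemma conv_c_far:
  assumes "dist a b > 2"
  shows "conv_c {a, b} = UNIV"
proof -
  have "\<not> (dist a c \<le> 1 \<and> dist b c \<le> 1)" for c
    using assms dist_triangle[of a b c] by (auto simp: dist_commute)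
  then show ?thesis by (auto simp: conv_c_pair)
qed

lemma pyth:
  fixes e v :: "'a::euclidean_space"
  assumes "norm e = 1" "v \<bullet> e = 0"
  shows "(norm (\<alpha> *\<^sub>R e + v))\<^sup>2 = \<alpha>\<^sup>2 + (norm v)\<^sup>2"
proof -
  have "e \<bullet> e = 1" using assms(1) by (simp add: norm_eq_sqrt_inner)
  then show ?thesis using assms(2)
    unfolding power2_norm_eq_inner by (simp add: inner_add_left inner_add_right inner_commute power2_eq_square)
qed

lemma decomp:
  fixes e X :: "'a::euclidean_space"
  assumes "norm e = 1"
  shows "(X - (X \<bullet> e) *\<^sub>R e) \<bullet> e = 0"
    and "(norm X)\<^sup>2 = (X \<bullet> e)\<^sup>2 + (norm (X - (X \<bullet> e) *\<^sub>R e))\<^sup>2"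
proof -
  have ee: "e \<bullet> e = 1" using assms(1) by (simp add: norm_eq_sqrt_inner)
  show 1: "(X - (X \<bullet> e) *\<^sub>R e) \<bullet> e = 0" using ee by (simp add: inner_diff_left)
  have "X = (X \<bullet> e) *\<^sub>R e + (X - (X \<bullet> e) *\<^sub>R e)" by simp
  then have "(norm X)\<^sup>2 = (norm ((X \<bullet> e) *\<^sub>R e + (X - (X \<bullet> e) *\<^sub>R e)))\<^sup>2" by simp
  also have "\<dots> = (X \<bullet> e)\<^sup>2 + (norm (X - (X \<bullet> e) *\<^sub>R e))\<^sup>2"
    by (rule pyth[OF assms 1])
  finally show "(norm X)\<^sup>2 = (X \<bullet> e)\<^sup>2 + (norm (X - (X \<bullet> e) *\<^sub>R e))\<^sup>2" .
qed

lemma alg2d: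
  fixes u \<rho> s \<sigma> h k :: real
  assumes "u \<ge> 0" "\<rho> \<ge> 0" "s \<ge> 0" "\<sigma> \<ge> 0" "h \<ge> 0" "k \<ge> 0" "h\<^sup>2 + k\<^sup>2 = 1"
    and c: "(s + k)\<^sup>2 + \<sigma>\<^sup>2 \<le> 1" and z: "u\<^sup>2 + (\<rho> + h)\<^sup>2 \<le> 1"
  shows "(u + s)\<^sup>2 + (\<rho> + \<sigma>)\<^sup>2 \<le> 1"
proof -
  have "h\<^sup>2 \<le> (\<rho> + h)\<^sup>2" using assms by (intro power_mono) auto
  then have "u\<^sup>2 \<le> k\<^sup>2" using z assms(7) by linarith
  then have uk: "u \<le> k" using assms by (simp add: power2_le_iff_abs_le)
  have "k\<^sup>2 \<le> (s + k)\<^sup>2" using assms by (intro power_mono) auto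
  then have "\<sigma>\<^sup>2 \<le> h\<^sup>2" using c assms(7) by linarith
  then have sh: "\<sigma> \<le> h" using assms by (simp add: power2_le_iff_abs_le)
  have p1: "s * (k - u) \<ge> 0" using uk assms by simp
  have p2: "\<rho> * (h - \<sigma>) \<ge> 0" using sh assms by simp
  show ?thesis using c z p1 p2 assms(7)
    by (simp add: power2_sum algebra_simps power2_eq_square)
qed

lemma norm_shift_sq:
  fixes e C :: "'a::euclidean_space"
  assumes e: "norm e = 1"
  shows "(norm (C + k *\<^sub>R e))\<^sup>2 = (C \<bullet> e + k)\<^sup>2 + (norm (C - (C \<bullet> e) *\<^sub>R e))\<^sup>2"
proof -
  have ee: "e \<bullet> e = 1" using e by (simp add: norm_eq_sqrt_inner)
  have "(C + k *\<^sub>R e) \<bullet> e = C \<bullet> e + k" using ee by (simp add: inner_add_left)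
  moreover have "(C + k *\<^sub>R e) - (C \<bullet> e + k) *\<^sub>R e = C - (C \<bullet> e) *\<^sub>R e"
    by (simp add: algebra_simps)
  ultimately show ?thesis using decomp(2)[OF e, of "C + k *\<^sub>R e"] by metis
qed

lemma conv_c_spin:
  fixes e m :: "'a::euclidean_space"
  assumes e: "norm e = 1" and d: "0 \<le> d" "d \<le> 2" and dim: "DIM('a) \<ge> 2"
  shows "conv_c {m - (d/2) *\<^sub>R e, m + (d/2) *\<^sub>R e} = {z. z - m \<in> spin e (sqrt (1 - d\<^sup>2/4))}"
proof -
  define k where "k = d/2"
  define h where "h = sqrt (1 - d\<^sup>2/4)"
  have k0: "k \<ge> 0" using d by (simp add: k_def)
  have d4': "d\<^sup>2 \<le> 4" using mult_mono[of d 2 d 2] d by (simp add: power2_eq_square)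
  then have d4: "1 - d\<^sup>2/4 \<ge> 0" by simp
  have h0: "h \<ge> 0" using d4' by (simp add: h_def)
  have hk: "h\<^sup>2 + k\<^sup>2 = 1" using d4 d4' by (simp add: h_def k_def power_divide)
  have ee: "e \<bullet> e = 1" using e by (simp add: norm_eq_sqrt_inner)
  have da: "dist (m - k *\<^sub>R e) c = norm ((c - m) + k *\<^sub>R e)" for c
    by (simp add: dist_norm norm_minus_commute algebra_simps)
  have db: "dist (m + k *\<^sub>R e) c = norm ((c - m) + (-k) *\<^sub>R e)" for c
    by (simp add: dist_norm norm_minus_commute algebra_simps)
  have key: "(\<forall>c. dist (m - k *\<^sub>R e) c \<le> 1 \<and> dist (m + k *\<^sub>R e) c \<le> 1 \<longrightarrow> dist c z \<le> 1)
      \<longleftrightarrow> z - m \<in> spin e h" for z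
  proof
    define Z where "Z = z - m"
    define x where "x = Z \<bullet> e"
    define y where "y = Z - x *\<^sub>R e"
    have ye: "y \<bullet> e = 0" unfolding y_def x_def by (rule decomp(1)[OF e])
    assume H: "\<forall>c. dist (m - k *\<^sub>R e) c \<le> 1 \<and> dist (m + k *\<^sub>R e) c \<le> 1 \<longrightarrow> dist c z \<le> 1"
    show "z - m \<in> spin e h"
    proof (rule ccontr)
      assume "z - m \<notin> spin e h"
      then have out: "x\<^sup>2 + (norm y + h)\<^sup>2 > 1"
        by (simp add: spin_def Z_def x_def y_def)
      obtain w where w1: "norm w = 1" and we: "w \<bullet> e = 0" and yw: "y = norm y *\<^sub>R w"
      proof (cases "y = 0")
        case True
        obtain q where "q \<noteq> 0" "orthogonal e q" using orthogonal_to_vector_exists[OF dim] by blast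
        then show ?thesis
          by (intro that[of "q /\<^sub>R norm q"]) (auto simp: True orthogonal_def inner_commute)
      next
        case False
        then show ?thesis using ye by (intro that[of "y /\<^sub>R norm y"]) auto
      qed
      define c where "c = m - h *\<^sub>R w"
      have Ce: "(c - m) \<bullet> e = 0" using we by (simp add: c_def)
      have nC: "norm (c - m) = h" using w1 h0 by (simp add: c_def)
      have sq: "(norm ((c - m) + k' *\<^sub>R e))\<^sup>2 = k'\<^sup>2 + h\<^sup>2" for k'
        using norm_shift_sq[OF e, of "c - m" k'] Ce nC by simp
      have "(norm ((c - m) + k *\<^sub>R e))\<^sup>2 = 1" "(norm ((c - m) + (-k) *\<^sub>R e))\<^sup>2 = 1"
        using hk sq[of k] sq[of "-k"] by (simp_all only: power2_minus)
      then have "norm ((c - m) + k *\<^sub>R e) \<le> 1" "norm ((c - m) + (-k) *\<^sub>R e) \<le> 1"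
        using power2_le_imp_le[of "norm ((c - m) + k *\<^sub>R e)" 1]
          power2_le_imp_le[of "norm ((c - m) + (-k) *\<^sub>R e)" 1] by simp_all
      then have "dist c z \<le> 1" using H da db by simp
      moreover have "z - c = x *\<^sub>R e + (norm y + h) *\<^sub>R w"
      proof -
        have 1: "z - c = Z + h *\<^sub>R w" by (simp add: c_def Z_def)
        have 2: "Z = x *\<^sub>R e + y" by (simp add: y_def)
        have 3: "y + h *\<^sub>R w = (norm y + h) *\<^sub>R w" by (metis yw scaleR_add_left)
        show ?thesis unfolding 1 2 add.assoc 3 ..
      qed
      moreover have "((norm y + h) *\<^sub>R w) \<bullet> e = 0" using we by simp
      ultimately have "norm (x *\<^sub>R e + (norm y + h) *\<^sub>R w) \<le> 1"
        by (metis dist_norm norm_minus_commute)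
      then have "(norm (x *\<^sub>R e + (norm y + h) *\<^sub>R w))\<^sup>2 \<le> 1"
        by (simp add: power_le_one)
      then have "x\<^sup>2 + (norm y + h)\<^sup>2 \<le> 1"
        using pyth[OF e \<open>((norm y + h) *\<^sub>R w) \<bullet> e = 0\<close>, of x] w1 h0 by simp
      with out show False by simp
    qed
  next
    define Z where "Z = z - m"
    assume S: "z - m \<in> spin e h"
    show "\<forall>c. dist (m - k *\<^sub>R e) c \<le> 1 \<and> dist (m + k *\<^sub>R e) c \<le> 1 \<longrightarrow> dist c z \<le> 1"
    proof (intro allI impI)
      fix c assume "dist (m - k *\<^sub>R e) c \<le> 1 \<and> dist (m + k *\<^sub>R e) c \<le> 1"
      then have c1: "norm ((c - m) + k *\<^sub>R e) \<le> 1" and c2: "norm ((c - m) + (-k) *\<^sub>R e) \<le> 1"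
        using da db by auto
      define C where "C = c - m"
      define \<xi> where "\<xi> = C \<bullet> e"
      define \<eta> where "\<eta> = C - \<xi> *\<^sub>R e"
      define x where "x = Z \<bullet> e"
      define y where "y = Z - x *\<^sub>R e"
      have sq1: "(norm (C + k' *\<^sub>R e))\<^sup>2 = (\<xi> + k')\<^sup>2 + (norm \<eta>)\<^sup>2" for k'
        unfolding \<xi>_def \<eta>_def by (rule norm_shift_sq[OF e])
      have "(norm (C + k *\<^sub>R e))\<^sup>2 \<le> 1" "(norm (C + (-k) *\<^sub>R e))\<^sup>2 \<le> 1"
        using c1 c2 by (auto simp: C_def power_le_one)
      then have A1: "(\<xi> + k)\<^sup>2 + (norm \<eta>)\<^sup>2 \<le> 1" and A2: "(\<xi> - k)\<^sup>2 + (norm \<eta>)\<^sup>2 \<le> 1"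
        using sq1[of k] sq1[of "-k"] by auto
      have A: "(\<bar>\<xi>\<bar> + k)\<^sup>2 + (norm \<eta>)\<^sup>2 \<le> 1"
      proof (cases "\<xi> \<ge> 0")
        case True then show ?thesis using A1 by simp
      next
        case False
        have "(\<bar>\<xi>\<bar> + k)\<^sup>2 = (\<xi> - k)\<^sup>2" using False by (simp add: power2_eq_square algebra_simps)
        then show ?thesis using A2 by simp
      qed
      have B: "x\<^sup>2 + (norm y + h)\<^sup>2 \<le> 1" using S by (simp add: spin_def Z_def x_def y_def)
      have B': "\<bar>x\<bar>\<^sup>2 + (norm y + h)\<^sup>2 \<le> 1" using B by simp
      have AB: "(\<bar>x\<bar> + \<bar>\<xi>\<bar>)\<^sup>2 + (norm y + norm \<eta>)\<^sup>2 \<le> 1"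
        by (rule alg2d[OF _ _ _ _ h0 k0 hk A B']) auto
      have Zc: "(Z - C) \<bullet> e = x - \<xi>" by (simp add: x_def \<xi>_def inner_diff_left)
      have Zc2: "(Z - C) - ((Z - C) \<bullet> e) *\<^sub>R e = y - \<eta>"
        unfolding Zc by (simp add: y_def \<eta>_def algebra_simps)
      have "(norm (Z - C))\<^sup>2 = (x - \<xi>)\<^sup>2 + (norm (y - \<eta>))\<^sup>2"
        using decomp(2)[OF e, of "Z - C"] unfolding Zc2 unfolding Zc .
      also have "\<dots> \<le> (\<bar>x\<bar> + \<bar>\<xi>\<bar>)\<^sup>2 + (norm y + norm \<eta>)\<^sup>2"
      proof (rule add_mono)
        show "(x - \<xi>)\<^sup>2 \<le> (\<bar>x\<bar> + \<bar>\<xi>\<bar>)\<^sup>2"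
        proof -
          have "\<bar>x - \<xi>\<bar> \<le> \<bar>x\<bar> + \<bar>\<xi>\<bar>" by (rule abs_triangle_ineq4)
          then have "\<bar>x - \<xi>\<bar>\<^sup>2 \<le> (\<bar>x\<bar> + \<bar>\<xi>\<bar>)\<^sup>2" by (rule power_mono) simp
          then show ?thesis by simp
        qed
        show "(norm (y - \<eta>))\<^sup>2 \<le> (norm y + norm \<eta>)\<^sup>2"
          by (intro power_mono norm_triangle_ineq4) simp
      qed
      also have "\<dots> \<le> 1" by (rule AB)
      finally have "(norm (Z - C))\<^sup>2 \<le> 1" .
      then have "norm (Z - C) \<le> 1" by (simp add: power_le_one_iff)
      then show "dist c z \<le> 1" by (simp add: Z_def C_def dist_norm norm_minus_commute)
    qed
  qed
  show ?thesis unfolding conv_c_pair using key by (auto simp: k_def h_def)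
qed


lemma convex_pow_nonneg: "convex_on {0::real..} (\<lambda>x. x ^ n)"
proof (cases "even n")
  case True
  show ?thesis by (rule convex_on_subset[OF convex_power_even[OF True]]) auto
next
  case False
  then show ?thesis by (rule convex_power_odd)
qed

lemma pow_convex_ineq:
  fixes p q u :: real
  assumes "p \<ge> 0" "q \<ge> 0" "0 \<le> u" "u \<le> 1"
  shows "((1 - u) * p + u * q) ^ n \<le> (1 - u) * p ^ n + u * q ^ n"
  using convex_onD[OF convex_pow_nonneg, of u p q] assms by simp

lemma sqrt_concave_ineq:
  fixes p q u :: real
  assumes "p \<ge> 0" "q \<ge> 0" "0 \<le> u" "u \<le> 1"
  shows "(1 - u) * sqrt p + u * sqrt q \<le> sqrt ((1 - u) * p + u * q)"
proof -
  define a b where "a = sqrt p" and "b = sqrt q"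
  have a0: "a \<ge> 0" and b0: "b \<ge> 0" using assms(1,2) by (simp_all add: a_def b_def)
  have pa: "p = a\<^sup>2" unfolding a_def using \<open>p \<ge> 0\<close> by simp
  have qb: "q = b\<^sup>2" unfolding b_def using \<open>q \<ge> 0\<close> by simp
  have "((1 - u) * a + u * b)\<^sup>2 \<le> (1 - u) * a\<^sup>2 + u * b\<^sup>2"
  proof -
    have "(1 - u) * a\<^sup>2 + u * b\<^sup>2 - ((1 - u) * a + u * b)\<^sup>2 = u * (1 - u) * (a - b)\<^sup>2"
      by (simp add: power2_eq_square algebra_simps)
    moreover have "u * (1 - u) * (a - b)\<^sup>2 \<ge> 0" using assms by simp
    ultimately show ?thesis by linarith
  qed
  then have "sqrt (((1 - u) * a + u * b)\<^sup>2) \<le> sqrt ((1 - u) * a\<^sup>2 + u * b\<^sup>2)"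
    by (rule real_sqrt_le_mono)
  moreover have "(1 - u) * a + u * b \<ge> 0" using a0 b0 assms by simp
  ultimately show ?thesis using a0 b0 by (simp add: pa qb a_def[symmetric] b_def[symmetric])
qed

lemma integrand_convex:
  fixes R \<kappa> u D1 D2 D3 :: real and m :: nat
  assumes k: "\<kappa> \<ge> 0" and u: "0 \<le> u" "u \<le> 1"
    and D1: "0 \<le> D1" "D1 \<le> 4" and D2: "0 \<le> D2" "D2 \<le> 4"
    and D3: "D3 \<le> (1 - u) * D1 + u * D2"
  shows "\<kappa> * (max 0 (R - sqrt (1 - D3/4))) ^ m \<le>
     (1 - u) * (\<kappa> * (max 0 (R - sqrt (1 - D1/4))) ^ m) + u * (\<kappa> * (max 0 (R - sqrt (1 - D2/4))) ^ m)"
proof -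
  define a b c where "a = sqrt (1 - D1/4)" and "b = sqrt (1 - D2/4)" and "c = sqrt (1 - D3/4)"
  have "(1 - u) * a + u * b \<le> sqrt ((1 - u) * (1 - D1/4) + u * (1 - D2/4))"
    unfolding a_def b_def using D1 D2 u by (intro sqrt_concave_ineq) auto
  also have "(1 - u) * (1 - D1/4) + u * (1 - D2/4) = 1 - ((1 - u) * D1 + u * D2) / 4"
    by (simp add: field_simps)
  also have "sqrt \<dots> \<le> c" unfolding c_def using D3 by (intro real_sqrt_le_mono) simp
  finally have abc: "(1 - u) * a + u * b \<le> c" .
  define p q where "p = max 0 (R - a)" and "q = max 0 (R - b)"
  have p0: "p \<ge> 0" and q0: "q \<ge> 0" by (simp_all add: p_def q_def)
  have "max 0 (R - c) \<le> (1 - u) * p + u * q"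
  proof (rule max.boundedI)
    show "0 \<le> (1 - u) * p + u * q" using p0 q0 u by simp
    have "R - c \<le> (1 - u) * (R - a) + u * (R - b)" using abc by (simp add: algebra_simps)
    also have "\<dots> \<le> (1 - u) * p + u * q"
      using u by (intro add_mono mult_left_mono) (auto simp: p_def q_def)
    finally show "R - c \<le> (1 - u) * p + u * q" .
  qed
  then have "(max 0 (R - c)) ^ m \<le> ((1 - u) * p + u * q) ^ m"
    by (rule power_mono) (rule max.cobounded1)
  also have "\<dots> \<le> (1 - u) * p ^ m + u * q ^ m"
    using p0 q0 u by (rule pow_convex_ineq)
  finally have "(max 0 (R - c)) ^ m \<le> (1 - u) * p ^ m + u * q ^ m" .
  then have "\<kappa> * (max 0 (R - c)) ^ m \<le> \<kappa> * ((1 - u) * p ^ m + u * q ^ m)"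
    using k by (rule mult_left_mono)
  then show ?thesis by (simp add: a_def b_def c_def p_def q_def algebra_simps)
qed


lemma vol_pair_near:
  fixes a b :: "real^'n"
  assumes dim: "CARD('n) \<ge> 2" and d2: "dist a b \<le> 2"
  shows "emeasure lebesgue (conv_c {a, b}) =
    (\<integral>\<^sup>+y. ennreal (unit_ball_vol (real (CARD('n) - 1)) *
        (max 0 (sqrt (1 - y\<^sup>2) - sqrt (1 - (dist a b)\<^sup>2/4))) ^ (CARD('n) - 1)) \<partial>lborel)"
proof -
  define d where "d = dist a b"
  define h where "h = sqrt (1 - d\<^sup>2/4)"
  obtain k :: 'n where True by blast
  define b0 :: "real^'n" where "b0 = axis k 1"
  have b0B: "b0 \<in> Basis" by (simp add: b0_def)
  have nb0: "norm b0 = 1" by (simp add: b0_def)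
  define e where "e = (if a = b then b0 else (1 / d) *\<^sub>R (b - a))"
  have d0: "d \<ge> 0" by (simp add: d_def)
  have ne: "norm e = 1"
    using nb0 by (auto simp: e_def d_def dist_norm norm_minus_commute)
  have bae: "b - a = d *\<^sub>R e"
    by (auto simp: e_def d_def dist_norm norm_minus_commute)
  define m0 where "m0 = (1/2) *\<^sub>R (a + b)"
  have am: "a = m0 - (d/2) *\<^sub>R e"
  proof -
    have "m0 - (d/2) *\<^sub>R e = m0 - (1/2) *\<^sub>R (b - a)" by (simp add: bae)
    also have "\<dots> = a" by (simp add: m0_def vec_eq_iff field_simps)
    finally show ?thesis ..
  qed
  have bm: "b = m0 + (d/2) *\<^sub>R e"
  proof -
    have "m0 + (d/2) *\<^sub>R e = m0 + (1/2) *\<^sub>R (b - a)" by (simp add: bae)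
    also have "\<dots> = b" by (simp add: m0_def vec_eq_iff field_simps)
    finally show ?thesis ..
  qed
  have dimA: "DIM(real^'n) \<ge> 2" using dim by simp
  have cc: "conv_c {a, b} = {z. z - m0 \<in> spin e h}"
  proof -
    have "d \<le> 2" using d2 by (simp add: d_def)
    from conv_c_spin[OF ne d0 this dimA, of m0]
    show ?thesis unfolding h_def by (simp only: am[symmetric] bm[symmetric])
  qed
  have d4': "d\<^sup>2 \<le> 4" using mult_mono[of d 2 d 2] d0 d2 by (simp add: power2_eq_square d_def)
  have h0: "h \<ge> 0" using d4' by (simp add: h_def)
  have tr: "{z. z - m0 \<in> spin e h} = (\<lambda>x. 1 *\<^sub>R x + m0) ` spin e h"
    by (auto simp: image_iff) (metis diff_add_cancel)
  have "emeasure lebesgue (conv_c {a, b}) = emeasure lebesgue (spin e h)"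
    unfolding cc tr emeasure_lebesgue_affine by simp
  also have "\<dots> = emeasure lborel (spin e h)"
    using borel_closed[OF closed_spin[of e h]] by simp
  also have "\<dots> = emeasure lborel (spin b0 h)"
  proof -
    have "norm e = norm b0" using ne nb0 by simp
    then obtain f where f: "orthogonal_transformation f" "f e = b0"
      by (rule orthogonal_transformation_exists)
    have "f -` spin b0 h = spin e h"
    proof -
      have "f z \<bullet> b0 = z \<bullet> e" for z using f by (metis orthogonal_transformation_def)
      moreover have "norm (f z - (z \<bullet> e) *\<^sub>R b0) = norm (z - (z \<bullet> e) *\<^sub>R e)" for z
      proof -
        have "f z - (z \<bullet> e) *\<^sub>R b0 = f (z - (z \<bullet> e) *\<^sub>R e)"
          using f orthogonal_transformation_linear[OF f(1)]
          by (simp add: linear_diff orthogonal_transformation_scaleR)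
        then show ?thesis using orthogonal_transformation_norm[OF f(1)] by simp
      qed
      ultimately show ?thesis by (auto simp: spin_def)
    qed
    then show ?thesis
      using emeasure_orth_preimage[OF f(1) borel_closed[OF closed_spin[of b0 h]]] by simp
  qed
  also have "\<dots> = (\<integral>\<^sup>+y. ennreal (unit_ball_vol (real (DIM(real^'n) - 1)) *
        (max 0 (sqrt (1 - y\<^sup>2) - h)) ^ (DIM(real^'n) - 1)) \<partial>lborel)"
    by (rule emeasure_spin_basis[OF b0B h0 dimA])
  finally show ?thesis by (simp add: h_def d_def)
qed

lemma vol_pair_far:
  fixes a b :: "real^'n"
  assumes "dist a b > 2"
  shows "emeasure lebesgue (conv_c {a, b}) = \<infinity>"
  using conv_c_far[OF assms] by simp

lemma normsq_convex:
  fixes p q :: "'a::real_normed_vector"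
  assumes "0 \<le> u" "u \<le> 1"
  shows "(norm ((1 - u) *\<^sub>R p + u *\<^sub>R q))\<^sup>2 \<le> (1 - u) * (norm p)\<^sup>2 + u * (norm q)\<^sup>2"
proof -
  have "norm ((1 - u) *\<^sub>R p + u *\<^sub>R q) \<le> (1 - u) * norm p + u * norm q"
    using assms by (metis (no_types, opaque_lifting) abs_of_nonneg diff_ge_0_iff_ge norm_scaleR norm_triangle_ineq)
  then have "(norm ((1 - u) *\<^sub>R p + u *\<^sub>R q))\<^sup>2 \<le> ((1 - u) * norm p + u * norm q)\<^sup>2"
    by (rule power_mono) simp
  also have "\<dots> \<le> (1 - u) * (norm p)\<^sup>2 + u * (norm q)\<^sup>2"
    using assms by (intro pow_convex_ineq) auto
  finally show ?thesis .
qed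


theorem corollary3p3:
  fixes v x0 y0 :: "real ^ 'n" and \<alpha> \<beta> :: real
  assumes "CARD('n) \<ge> 2"
    and "norm v = 1"
  defines "L \<equiv> (\<lambda>t::real. conv_c {x0 + (t * \<alpha>) *\<^sub>R v, y0 + (t * \<beta>) *\<^sub>R v})"
  defines "f \<equiv> (\<lambda>t::real. emeasure lebesgue (L t))"
  shows "\<forall>s t u::real. 0 \<le> u \<and> u \<le> 1 \<longrightarrow>
           f ((1 - u) * s + u * t) \<le> ennreal (1 - u) * f s + ennreal u * f t"
proof (intro allI impI)
  fix s t u :: real
  assume u: "0 \<le> u \<and> u \<le> 1"
  define A where "A = (\<lambda>t::real. x0 + (t * \<alpha>) *\<^sub>R v)"
  define B where "B = (\<lambda>t::real. y0 + (t * \<beta>) *\<^sub>R v)"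
  define D where "D = (\<lambda>t. (dist (A t) (B t))\<^sup>2)"
  define m where "m = CARD('n) - 1"
  define \<kappa> where "\<kappa> = unit_ball_vol (real m)"
  define g where "g = (\<lambda>D y. \<kappa> * (max 0 (sqrt (1 - y\<^sup>2) - sqrt (1 - D/4))) ^ m)"
  define M where "M = (1 - u) * s + u * t"
  have k0: "\<kappa> \<ge> 0" by (simp add: \<kappa>_def)
  have g0: "g D' y \<ge> 0" for D' y using k0 by (simp add: g_def)
  have gm: "(\<lambda>y. ennreal (g D' y)) \<in> borel_measurable borel" for D'
    unfolding g_def by measurable
  have fL: "f \<tau> = emeasure lebesgue (conv_c {A \<tau>, B \<tau>})" for \<tau>
    by (simp add: f_def L_def A_def B_def)
  have fnear: "f \<tau> = (\<integral>\<^sup>+y. ennreal (g (D \<tau>) y) \<partial>lborel)" if "dist (A \<tau>) (B \<tau>) \<le> 2" for \<tau>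
    unfolding fL using vol_pair_near[OF assms(1) that] by (simp add: g_def D_def m_def \<kappa>_def)
  have ffar: "f \<tau> = \<infinity>" if "dist (A \<tau>) (B \<tau>) > 2" for \<tau>
    unfolding fL using vol_pair_far[OF that] .
  have BA: "B \<tau> - A \<tau> = (y0 - x0) + \<tau> *\<^sub>R ((\<beta> - \<alpha>) *\<^sub>R v)" for \<tau>
    by (simp add: A_def B_def vec_eq_iff algebra_simps)
  have DB: "D \<tau> = (norm (B \<tau> - A \<tau>))\<^sup>2" for \<tau>
    by (simp add: D_def dist_norm norm_minus_commute)
  have Dconv: "D M \<le> (1 - u) * D s + u * D t"
  proof -
    have "B M - A M = (1 - u) *\<^sub>R (B s - A s) + u *\<^sub>R (B t - A t)"
      unfolding BA M_def by (simp add: vec_eq_iff algebra_simps)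
    then show ?thesis unfolding DB using normsq_convex[of u] u by simp
  qed
  show "f M \<le> ennreal (1 - u) * f s + ennreal u * f t"
  proof (cases "dist (A s) (B s) \<le> 2 \<and> dist (A t) (B t) \<le> 2")
    case True
    have sq4: "D \<tau> \<le> 4" if "dist (A \<tau>) (B \<tau>) \<le> 2" for \<tau>
      using that mult_mono[of "dist (A \<tau>) (B \<tau>)" 2 "dist (A \<tau>) (B \<tau>)" 2]
      by (simp add: D_def power2_eq_square)
    have D0: "D \<tau> \<ge> 0" for \<tau> by (simp add: D_def)
    have Ds: "D s \<le> 4" and Dt: "D t \<le> 4" using True sq4 by auto
    have "D M \<le> 4"
    proof -
      have "(1 - u) * D s + u * D t \<le> (1 - u) * 4 + u * 4"
        using u Ds Dt by (intro add_mono mult_left_mono) auto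
      then show ?thesis using Dconv by simp
    qed
    then have "dist (A M) (B M) \<le> 2"
      using power2_le_imp_le[of "dist (A M) (B M)" 2] by (simp add: D_def)
    then have "f M = (\<integral>\<^sup>+y. ennreal (g (D M) y) \<partial>lborel)" by (rule fnear)
    also have "\<dots> \<le> (\<integral>\<^sup>+y. ennreal (1 - u) * ennreal (g (D s) y) + ennreal u * ennreal (g (D t) y) \<partial>lborel)"
    proof (rule nn_integral_mono)
      fix y
      have "g (D M) y \<le> (1 - u) * g (D s) y + u * g (D t) y"
        unfolding g_def using integrand_convex[OF k0 _ _ D0 Ds D0 Dt Dconv] u by simp
      then have "ennreal (g (D M) y) \<le> ennreal ((1 - u) * g (D s) y + u * g (D t) y)"
        by (rule ennreal_leI)
      also have "\<dots> = ennreal (1 - u) * ennreal (g (D s) y) + ennreal u * ennreal (g (D t) y)"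
        using u g0 by (simp add: ennreal_plus ennreal_mult)
      finally show "ennreal (g (D M) y) \<le> ennreal (1 - u) * ennreal (g (D s) y) + ennreal u * ennreal (g (D t) y)" .
    qed
    also have "\<dots> = (\<integral>\<^sup>+y. ennreal (1 - u) * ennreal (g (D s) y) \<partial>lborel) + (\<integral>\<^sup>+y. ennreal u * ennreal (g (D t) y) \<partial>lborel)"
      by (rule nn_integral_add) (use gm in auto)
    also have "\<dots> = ennreal (1 - u) * (\<integral>\<^sup>+y. ennreal (g (D s) y) \<partial>lborel) + ennreal u * (\<integral>\<^sup>+y. ennreal (g (D t) y) \<partial>lborel)"
      using gm by (simp add: nn_integral_cmult)
    also have "\<dots> = ennreal (1 - u) * f s + ennreal u * f t"
      using True by (simp add: fnear)
    finally show ?thesis .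
  next
    case False
    then have inf: "f s = \<infinity> \<or> f t = \<infinity>" using ffar by (auto simp: not_le)
    consider "u = 0" | "u = 1" | "0 < u \<and> u < 1" using u by linarith
    then show ?thesis
    proof cases
      case 1 then show ?thesis by (simp add: M_def)
    next
      case 2 then show ?thesis by (simp add: M_def)
    next
      case 3
      then have "ennreal (1 - u) \<noteq> 0" "ennreal u \<noteq> 0" by auto
      then have eq: "ennreal (1 - u) * f s + ennreal u * f t = \<infinity>"
        using inf by (auto simp: ennreal_mult_top)
      show ?thesis unfolding eq by simp
    qed
  qed
qed


end
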